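(* Let $K\subseteq L$ be convex bodies in $\mathbb{R}^d$ with the origin in the interior of $K$. Let $F$ be an $s$-dimensional linear subspace, $(v_1,p_1),\dots,(v_m,p_m)$ contact pairs of $K$ and $L$, and $\alpha_1,\dots,\alpha_m$ positive weights with \[ P_F\Big(\sum_i\alpha_ip_i\otimes v_i\Big)P_F=P_F,\quad\sum_i\alpha_ip_i=0,\quad \operatorname{tr}\Big(\sum_i\alpha_ip_i\otimes v_i\Big)=\sum_i\alpha_i=d. \] Assume additionally that $P_FK\subset L\cap F$. Then there exist a point $z$ in the relative interior of $L\cap F$, contact pairs $(v_1',p_1'),\dots,(v_m',p_m')$ of $K-z$ and $L-z$, and weights $c_1,\dots,c_m>0$ such that \[ \sum_i c_ip_i'\otimes v_i'=\sum_i\alpha_ip_i\otimes v_i\quad\text{and}\quad \sum_ic_iP_Fv_i'=\sum_ic_ip_i'=0. \]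
   Context: A convex body is a compact convex set with nonempty interior. $P_F$ is orthogonal projection onto $F$. The polar of $S$ is $S^\circ=\{p:\langle x,p\rangle\le1\ \forall x\in S\}$. For convex bodies $K\subseteq L$, a contact pair of $K$ and $L$ is a pair $(v,p)$ with $v\in\partial K\cap\partial L$, $p\in\partial K^\circ\cap\partial L^\circ$, $\langle p,v\rangle=1$. For vectors $p,v$, $p\otimes v$ is the operator $x\mapsto\langle v,x\rangle p$. *)

theory Defs
  imports "HOL-Analysis.Analysis"
begin

definition convex_body :: "'a::euclidean_space set \<Rightarrow> bool" where
  "convex_body K \<longleftrightarrow> compact K \<and> convex K \<and> interior K \<noteq> {}"

definition polar :: "'a::euclidean_space set \<Rightarrow> 'a set" where
  "polar S = {p. \<forall>x\<in>S. inner x p \<le> 1}"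

definition contact_pair :: "'a::euclidean_space set \<Rightarrow> 'a set \<Rightarrow> 'a \<Rightarrow> 'a \<Rightarrow> bool" where
  "contact_pair K L v p \<longleftrightarrow>
     v \<in> frontier K \<inter> frontier L \<and> p \<in> frontier (polar K) \<inter> frontier (polar L)
     \<and> inner p v = 1"

definition proj :: "'a::euclidean_space set \<Rightarrow> 'a \<Rightarrow> 'a" where
  "proj F x = (THE y. y \<in> F \<and> (\<forall>w\<in>F. inner (x - y) w = 0))"

definition tensor :: "'a::euclidean_space \<Rightarrow> 'a \<Rightarrow> 'a \<Rightarrow> 'a" where
  "tensor p v = (\<lambda>x. inner v x *\<^sub>R p)"

definition op_trace :: "('a::euclidean_space \<Rightarrow> 'a) \<Rightarrow> real" where
  "op_trace A = (\<Sum>b\<in>Basis. inner (A b) b)"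

end

theory Submission
  imports Defs
begin

lemma proj_char:
  assumes "subspace F"
  shows "proj F x \<in> F \<and> (\<forall>w\<in>F. inner (x - proj F x) w = 0)"
proof -
  obtain y z where y: "y \<in> span F" and z: "\<And>w. w \<in> span F \<Longrightarrow> orthogonal z w" and xe: "x = y + z"
    using orthogonal_subspace_decomp_exists by blast
  have sF: "span F = F" using assms by (simp add: span_eq_iff)
  have P: "y \<in> F \<and> (\<forall>w\<in>F. inner (x - y) w = 0)"
    using y z xe sF by (auto simp: orthogonal_def)
  have U: "y' = y" if "y' \<in> F \<and> (\<forall>w\<in>F. inner (x - y') w = 0)" for y'
  proof -
    have "y - y' \<in> F" using that P assms by (simp add: subspace_diff)
    hence "inner (x - y') (y - y') = 0" "inner (x - y) (y - y') = 0" using that P by auto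
    hence "inner (y - y') (y - y') = 0" by (simp add: inner_diff_left)
    thus ?thesis by simp
  qed
  have "proj F x = y" unfolding proj_def using P U by (rule the_equality)
  thus ?thesis using P by simp
qed

lemma proj_unique:
  assumes "subspace F" "y \<in> F" "\<forall>w\<in>F. inner (x - y) w = 0"
  shows "proj F x = y"
proof -
  have P: "proj F x \<in> F" "\<forall>w\<in>F. inner (x - proj F x) w = 0" using proj_char[OF assms(1)] by auto
  have "y - proj F x \<in> F" using assms P by (simp add: subspace_diff)
  hence "inner (x - y) (y - proj F x) = 0" "inner (x - proj F x) (y - proj F x) = 0" using assms P by auto
  hence "inner (y - proj F x) (y - proj F x) = 0" by (simp add: inner_diff_left)
  thus ?thesis by simp
qed

lemma proj_in: "subspace F \<Longrightarrow> proj F x \<in> F" using proj_char by blast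
lemma proj_orth: "subspace F \<Longrightarrow> w \<in> F \<Longrightarrow> inner (x - proj F x) w = 0" using proj_char by blast

lemma proj_self: "subspace F \<Longrightarrow> z \<in> F \<Longrightarrow> proj F z = z"
  by (rule proj_unique) auto

lemma proj_linear:
  assumes F: "subspace F" shows "linear (proj F)"
proof (rule linearI)
  fix a b
  show "proj F (a + b) = proj F a + proj F b"
  proof (rule proj_unique[OF F])
    show "proj F a + proj F b \<in> F" using subspace_add[OF F proj_in[OF F] proj_in[OF F]] .
    show "\<forall>w\<in>F. inner (a + b - (proj F a + proj F b)) w = 0"
    proof
      fix w assume w: "w \<in> F"
      have "inner (a + b - (proj F a + proj F b)) w = inner (a - proj F a) w + inner (b - proj F b) w"
        by (simp add: algebra_simps inner_diff_left inner_add_left)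
      thus "inner (a + b - (proj F a + proj F b)) w = 0" using proj_orth[OF F w] by simp
    qed
  qed
next
  fix c :: real and a
  show "proj F (c *\<^sub>R a) = c *\<^sub>R proj F a"
  proof (rule proj_unique[OF F])
    show "c *\<^sub>R proj F a \<in> F" using subspace_scale[OF F proj_in[OF F]] .
    show "\<forall>w\<in>F. inner (c *\<^sub>R a - c *\<^sub>R proj F a) w = 0"
    proof
      fix w assume w: "w \<in> F"
      have "inner (c *\<^sub>R a - c *\<^sub>R proj F a) w = c * inner (a - proj F a) w"
        by (simp add: algebra_simps inner_diff_left)
      thus "inner (c *\<^sub>R a - c *\<^sub>R proj F a) w = 0" using proj_orth[OF F w] by simp
    qed
  qed
qed

lemma proj_sym:
  assumes F: "subspace F" shows "inner (proj F x) y = inner x (proj F y)"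
proof -
  have "inner (proj F x) y = inner (proj F x) (proj F y) + inner (y - proj F y) (proj F x)"
    by (simp add: inner_diff_left inner_diff_right inner_commute)
  also have "\<dots> = inner (proj F x) (proj F y)" using proj_orth[OF F proj_in[OF F]] by simp
  also have "\<dots> = inner x (proj F y) - inner (x - proj F x) (proj F y)"
    by (simp add: inner_diff_left)
  also have "\<dots> = inner x (proj F y)" using proj_orth[OF F proj_in[OF F]] by simp
  finally show ?thesis .
qed

lemma vec_ext: "(\<And>w. inner a w = inner b w) \<Longrightarrow> (a::'a::real_inner) = b"
proof -
  assume h: "\<And>w. inner a w = inner b w"
  have "inner (a - b) (a - b) = 0" using h[of "a - b"] by (simp add: inner_diff_left)
  thus ?thesis by simp
qed

lemma closed_polar: "closed (polar S)"
proof -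
  have "polar S = (\<Inter>x\<in>S. {p. inner x p \<le> 1})" by (auto simp: polar_def)
  thus ?thesis by (auto intro!: closed_INT closed_halfspace_le)
qed

lemma frontier_polar_in: "p \<in> frontier (polar S) \<Longrightarrow> p \<in> polar S"
  using closed_polar frontier_subset_closed by blast

lemma in_frontier_polar:
  assumes q: "q \<in> polar S" and x: "x \<in> S" and e: "inner x q = 1"
  shows "q \<in> frontier (polar S)"
proof -
  have "q \<notin> interior (polar S)"
  proof
    assume "q \<in> interior (polar S)"
    then obtain r where r: "r > 0" "ball q r \<subseteq> polar S" unfolding mem_interior by blast
    have "q \<noteq> 0" using e by auto
    hence nq: "norm q > 0" by simp
    define t where "t = r / (2 * norm q)"
    have t: "t > 0" using r nq by (simp add: t_def)
    have qq: "q - (1 + t) *\<^sub>R q = (- t) *\<^sub>R q" by (simp add: scaleR_add_left)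
    have "dist q ((1 + t) *\<^sub>R q) = t * norm q"
      using t unfolding dist_norm qq by simp
    also have "\<dots> = r / 2" using nq by (simp add: t_def)
    also have "\<dots> < r" using r by simp
    finally have "(1 + t) *\<^sub>R q \<in> polar S" using r by auto
    hence "inner x ((1 + t) *\<^sub>R q) \<le> 1" using x by (auto simp: polar_def)
    hence "(1 + t) * inner x q \<le> 1" by simp
    thus False using e t by simp
  qed
  thus ?thesis using q closure_subset by (auto simp: frontier_def)
qed

lemma zero_rel_interior_LF:
  assumes F: "subspace F" and L: "0 \<in> interior L"
  shows "0 \<in> rel_interior (L \<inter> F)"
proof -
  have h: "affine hull (L \<inter> F) \<subseteq> F"
    by (rule hull_minimal) (auto simp: subspace_imp_affine F)
  have "0 \<in> F" using F by (rule subspace_0)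
  hence a: "0 \<in> interior L \<inter> (L \<inter> F)" using L interior_subset by blast
  have b: "interior L \<inter> affine hull (L \<inter> F) \<subseteq> L \<inter> F" using h interior_subset by blast
  show ?thesis unfolding mem_rel_interior using a b open_interior by blast
qed

theorem mainTheorem11:
  fixes K L F :: "'a::euclidean_space set"
    and d s m :: nat
    and v p :: "nat \<Rightarrow> 'a" and \<alpha> :: "nat \<Rightarrow> real"
  assumes "d = DIM('a)"
    and "convex_body K" and "convex_body L" and "K \<subseteq> L"
    and "0 \<in> interior K"
    and "subspace F" and "dim F = s"
    and "\<forall>i<m. contact_pair K L (v i) (p i)"
    and "\<forall>i<m. \<alpha> i > 0"
    and "\<forall>x. proj F ((\<Sum>i<m. \<alpha> i *\<^sub>R tensor (p i) (v i) (proj F x))) = proj F x"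
    and "(\<Sum>i<m. \<alpha> i *\<^sub>R p i) = 0"
    and "op_trace (\<lambda>x. \<Sum>i<m. \<alpha> i *\<^sub>R tensor (p i) (v i) x) = real d"
    and "(\<Sum>i<m. \<alpha> i) = real d"
    and "proj F ` K \<subseteq> L \<inter> F"
  shows "\<exists>z \<in> rel_interior (L \<inter> F). \<exists>v' p' :: nat \<Rightarrow> 'a. \<exists>c :: nat \<Rightarrow> real.
           (\<forall>i<m. contact_pair ((\<lambda>x. x - z) ` K) ((\<lambda>x. x - z) ` L) (v' i) (p' i))
         \<and> (\<forall>i<m. c i > 0)
         \<and> (\<forall>x. (\<Sum>i<m. c i *\<^sub>R tensor (p' i) (v' i) x) = (\<Sum>i<m. \<alpha> i *\<^sub>R tensor (p i) (v i) x))
         \<and> (\<Sum>i<m. c i *\<^sub>R proj F (v' i)) = 0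
         \<and> (\<Sum>i<m. c i *\<^sub>R p' i) = 0"
proof -
  note dd = assms(1) and KB = assms(2) and LB = assms(3) and KL = assms(4) and K0 = assms(5)
    and F = assms(6) and CP = assms(8) and apos = assms(9) and hA = assms(10)
    and hp = assms(11) and hsum = assms(13) and hPK = assms(14)
  define P where "P = proj F"
  have linP: "linear P" unfolding P_def using proj_linear[OF F] .
  have dpos: "real d > 0" using dd by simp
  have vK: "v i \<in> K" if "i < m" for i
  proof -
    have "closed K" using KB by (simp add: convex_body_def compact_imp_closed)
    thus ?thesis using CP that frontier_subset_closed unfolding contact_pair_def by blast
  qed
  have vL: "v i \<in> L" if "i < m" for i using vK[OF that] KL by blast
  have pK: "p i \<in> polar K" and pL: "p i \<in> polar L" and pv: "inner (p i) (v i) = 1"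
    and vfK: "v i \<in> frontier K" and vfL: "v i \<in> frontier L" if "i < m" for i
    using CP that frontier_polar_in unfolding contact_pair_def by auto
  define S where "S = (\<Sum>i<m. \<alpha> i *\<^sub>R v i)"
  define z where "z = (1 / (real d + 1)) *\<^sub>R P S"
  define u where "u = (1 / real d) *\<^sub>R S"
  have uK: "u \<in> K"
  proof -
    have "u = (\<Sum>i<m. (\<alpha> i / real d) *\<^sub>R v i)"
      unfolding u_def S_def by (simp add: scaleR_sum_right)
    also have "\<dots> \<in> K"
    proof (rule convex_sum)
      show "convex K" using KB by (simp add: convex_body_def)
      show "(\<Sum>i<m. \<alpha> i / real d) = 1" using hsum dpos by (simp add: sum_divide_distrib[symmetric])
      show "\<And>i. i \<in> {..<m} \<Longrightarrow> 0 \<le> \<alpha> i / real d" using apos dpos by (simp add: less_imp_le)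
      show "\<And>i. i \<in> {..<m} \<Longrightarrow> v i \<in> K" using vK by simp
    qed simp
    finally show ?thesis .
  qed
  define y where "y = P u"
  have yLF: "y \<in> L \<inter> F" using hPK uK unfolding y_def P_def by blast
  have PS: "P S = real d *\<^sub>R y"
  proof -
    have "S = real d *\<^sub>R u" unfolding u_def using dpos by simp
    thus ?thesis unfolding y_def using linP by (simp add: linear_scale)
  qed
  have zy: "z = (real d / (real d + 1)) *\<^sub>R y" unfolding z_def PS by simp
  have zF: "z \<in> F" unfolding z_def P_def using F proj_in subspace_scale by blast
  have Pz: "P z = z" unfolding P_def using proj_self[OF F zF] .
  have z_ri: "z \<in> rel_interior (L \<inter> F)"
  proof -
    have cv: "convex (L \<inter> F)" using LB F by (simp add: convex_body_def convex_Int subspace_imp_convex)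
    have 0: "0 \<in> rel_interior (L \<inter> F)"
      using zero_rel_interior_LF[OF F] K0 KL interior_mono by blast
    have "y - (1 / (real d + 1)) *\<^sub>R (y - 0) \<in> rel_interior (L \<inter> F)"
      by (rule rel_interior_closure_convex_shrink[OF cv 0]) (use yLF closure_subset[of "L \<inter> F"] dpos in auto)
    moreover have "y - (1 / (real d + 1)) *\<^sub>R (y - 0) = z"
    proof -
      have e: "1 - 1 / (real d + 1) = real d / (real d + 1)" using dpos by (simp add: field_simps)
      have "y - (1 / (real d + 1)) *\<^sub>R (y - 0) = (1 - 1 / (real d + 1)) *\<^sub>R y"
        by (simp add: scaleR_diff_left)
      thus ?thesis unfolding zy e .
    qed
    ultimately show ?thesis by simp
  qed
  define t where "t i = inner (p i) z" for i
  have t1: "t i < 1" if "i < m" for i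
  proof -
    have "inner y (p i) \<le> 1" using pL[OF that] yLF unfolding polar_def by blast
    hence "t i = (real d / (real d + 1)) * inner y (p i)" unfolding t_def zy by (simp add: inner_commute)
    also have "\<dots> \<le> (real d / (real d + 1)) * 1"
      using \<open>inner y (p i) \<le> 1\<close> dpos by (intro mult_left_mono) auto
    also have "\<dots> < 1" using dpos by simp
    finally show ?thesis .
  qed
  define v' where "v' i = v i - z" for i
  define p' where "p' i = (1 / (1 - t i)) *\<^sub>R p i" for i
  define c where "c i = \<alpha> i * (1 - t i)" for i
  have trans: "(\<lambda>x. x - z) ` X = (+) (- z) ` X" for X :: "'a set"
    by (rule image_cong) auto
  have cpair: "contact_pair ((\<lambda>x. x - z) ` K) ((\<lambda>x. x - z) ` L) (v' i) (p' i)"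
    if i: "i < m" for i
  proof -
    have ti: "1 - t i > 0" using t1[OF i] by simp
    have ip: "inner (x - z) (p' i) = (inner x (p i) - t i) / (1 - t i)" for x
      unfolding p'_def t_def by (simp add: inner_diff_left inner_diff_right inner_commute divide_simps)
    have vfr: "v' i \<in> frontier ((\<lambda>x. x - z) ` Q)" if "v i \<in> frontier Q" for Q
      unfolding trans frontier_translation v'_def using that by force
    have pol: "p' i \<in> frontier (polar ((\<lambda>x. x - z) ` Q))"
      if "p i \<in> polar Q" "v i \<in> Q" for Q
    proof (rule in_frontier_polar)
      show "p' i \<in> polar ((\<lambda>x. x - z) ` Q)"
        unfolding polar_def
      proof (clarsimp)
        fix x assume "x \<in> Q"
        hence "inner x (p i) \<le> 1" using that(1) unfolding polar_def by blast
        thus "inner (x - z) (p' i) \<le> 1" unfolding ip using ti by (simp add: divide_simps)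
      qed
      show "v i - z \<in> (\<lambda>x. x - z) ` Q" using that(2) by blast
      show "inner (v i - z) (p' i) = 1" unfolding ip using ti pv[OF i] by (simp add: inner_commute)
    qed
    have "inner (p' i) (v' i) = 1"
      using ip[of "v i"] ti pv[OF i] unfolding v'_def by (simp add: inner_commute)
    thus ?thesis unfolding contact_pair_def
      using vfr[OF vfK[OF i]] vfr[OF vfL[OF i]] pol[OF pK[OF i] vK[OF i]] pol[OF pL[OF i] vL[OF i]]
      by blast
  qed
  have cpos: "c i > 0" if "i < m" for i
    using apos that t1[OF that] unfolding c_def by simp
  have ten: "(\<Sum>i<m. c i *\<^sub>R tensor (p' i) (v' i) x) = (\<Sum>i<m. \<alpha> i *\<^sub>R tensor (p i) (v i) x)" for x
  proof -
    have "c i *\<^sub>R tensor (p' i) (v' i) x = \<alpha> i *\<^sub>R tensor (p i) (v i) x - inner z x *\<^sub>R (\<alpha> i *\<^sub>R p i)"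
      if i: "i < m" for i
    proof -
      have ti: "1 - t i \<noteq> 0" using t1[OF i] by simp
      have a: "c i *\<^sub>R tensor (p' i) (v' i) x = (c i * inner (v' i) x / (1 - t i)) *\<^sub>R p i"
        by (simp add: tensor_def p'_def)
      have b: "c i * inner (v' i) x / (1 - t i) = \<alpha> i * inner (v i) x - inner z x * \<alpha> i"
        using ti by (simp add: c_def v'_def inner_diff_left field_simps)
      show ?thesis unfolding a b by (simp add: tensor_def scaleR_diff_left)
    qed
    hence "(\<Sum>i<m. c i *\<^sub>R tensor (p' i) (v' i) x)
        = (\<Sum>i<m. \<alpha> i *\<^sub>R tensor (p i) (v i) x - inner z x *\<^sub>R (\<alpha> i *\<^sub>R p i))"
      by (intro sum.cong) auto
    also have "\<dots> = (\<Sum>i<m. \<alpha> i *\<^sub>R tensor (p i) (v i) x) - inner z x *\<^sub>R (\<Sum>i<m. \<alpha> i *\<^sub>R p i)"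
      by (simp add: sum_subtractf scaleR_sum_right)
    finally show ?thesis using hp by simp
  qed
  have psum: "(\<Sum>i<m. c i *\<^sub>R p' i) = 0"
  proof -
    have "(\<Sum>i<m. c i *\<^sub>R p' i) = (\<Sum>i<m. \<alpha> i *\<^sub>R p i)"
    proof (intro sum.cong refl)
      fix i assume "i \<in> {..<m}"
      hence ti: "1 - t i \<noteq> 0" using t1 by force
      show "c i *\<^sub>R p' i = \<alpha> i *\<^sub>R p i" unfolding c_def p'_def using ti by simp
    qed
    thus ?thesis using hp by simp
  qed
  define B where "B = (\<Sum>i<m. (\<alpha> i * t i) *\<^sub>R v i)"
  have PB: "P B = z"
  proof (rule vec_ext)
    fix w
    have "inner (P B) w = inner B (P w)" unfolding P_def by (rule proj_sym[OF F])
    also have "\<dots> = (\<Sum>i<m. \<alpha> i * (t i * inner (v i) (P w)))"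
      unfolding B_def by (simp add: inner_sum_left mult.assoc)
    also have "\<dots> = inner z (\<Sum>i<m. \<alpha> i *\<^sub>R tensor (p i) (v i) (P w))"
      unfolding t_def tensor_def by (simp add: inner_sum_right algebra_simps inner_commute)
    also have "\<dots> = inner (P z) (\<Sum>i<m. \<alpha> i *\<^sub>R tensor (p i) (v i) (P w))" using Pz by simp
    also have "\<dots> = inner z (P (\<Sum>i<m. \<alpha> i *\<^sub>R tensor (p i) (v i) (P w)))"
      unfolding P_def by (rule proj_sym[OF F])
    also have "\<dots> = inner z (P w)" using hA unfolding P_def by simp
    also have "\<dots> = inner (P z) w" unfolding P_def by (rule proj_sym[OF F, symmetric])
    finally show "inner (P B) w = inner z w" using Pz by simp
  qed
  have tsum: "(\<Sum>i<m. \<alpha> i * t i) = 0"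
  proof -
    have "(\<Sum>i<m. \<alpha> i * t i) = inner (\<Sum>i<m. \<alpha> i *\<^sub>R p i) z"
      unfolding t_def by (simp add: inner_sum_left)
    thus ?thesis using hp by simp
  qed
  have csum: "(\<Sum>i<m. c i) = real d"
    unfolding c_def using hsum tsum by (simp add: algebra_simps sum_subtractf)
  have vsum: "(\<Sum>i<m. c i *\<^sub>R proj F (v' i)) = 0"
  proof -
    have "(\<Sum>i<m. c i *\<^sub>R proj F (v' i)) = P (\<Sum>i<m. c i *\<^sub>R v' i)"
      unfolding P_def using proj_linear[OF F] by (simp add: linear_sum linear_scale)
    also have "(\<Sum>i<m. c i *\<^sub>R v' i) = (\<Sum>i<m. \<alpha> i *\<^sub>R v i - (\<alpha> i * t i) *\<^sub>R v i - c i *\<^sub>R z)"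
      unfolding v'_def c_def by (intro sum.cong refl) (simp add: algebra_simps)
    also have "\<dots> = S - B - real d *\<^sub>R z"
      unfolding S_def B_def using csum by (simp add: sum_subtractf scaleR_sum_left[symmetric])
    also have "P \<dots> = P S - P B - real d *\<^sub>R P z" using linP by (simp add: linear_diff linear_scale)
    also have "\<dots> = (real d + 1) *\<^sub>R z - z - real d *\<^sub>R z"
      using PB Pz dpos unfolding z_def by simp
    also have "\<dots> = 0" by (simp add: algebra_simps)
    finally show ?thesis .
  qed
  show ?thesis
    using z_ri cpair cpos ten vsum psum by blast
qed

end
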